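(* Fix a positive integer $d_m$. For $n$ and $k$ with $k\ge\ell(d_m)$ and $n\ge k+\ell(d_m)+2d_m$, let $n'=n-k-\ell(d_m)-2d_m$ and let $\mathcal C_2(n,k,1,d_m)=\{0^k\vec u1^{d_m}\vec c1^{d_m}:\vec c\in A_2(n',k,d_m)\}$. Then $$\min_{k}\ \mathrm{red}(\mathcal C_2(n,k,1,d_m))=\log_2 n+(d_m-1)\log_2\log_2 n+\Theta(1),$$ and the minimum is attained by values of $k$ of the form $k=\log_2 n+(d_m-1)\log_2\log_2 n+\Theta(1)$.
   Context: Binary alphabet. A vector of length $m$ is a $(d,k)$-WWL vector if $m<k$ or every window of $k$ consecutive entries has Hamming weight at least $d$; $A_2(m,k,d)$ is the set of binary $(d,k)$-WWL vectors of length $m$. $\ell(d)=d\lceil\log_2 d\rceil+d$ and $\vec u=1^d\vec u_0\cdots\vec u_{\lceil\log_2 d\rceil-1}\in\{0,1\}^{\ell(d)}$, where $\vec u_i$ is the length-$d$ prefix of $(1^{2^i}0^{2^i})^d$; here $d=d_m$. For $A\subseteq\{0,1\}^n$, $\mathrm{red}(A)=n-\log_2|A|$. *)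

theory Defs
  imports Complex_Main
begin

text \<open>Binary vectors are boolean lists (True = 1, False = 0).\<close>

definition hweight :: "bool list \<Rightarrow> nat" where
  "hweight x = length (filter id x)"

definition is_wwl :: "nat \<Rightarrow> nat \<Rightarrow> bool list \<Rightarrow> bool" where
  "is_wwl d k x \<longleftrightarrow> length x < k \<or>
     (\<forall>i. i + k \<le> length x \<longrightarrow> d \<le> hweight (take k (drop i x)))"

definition A2 :: "nat \<Rightarrow> nat \<Rightarrow> nat \<Rightarrow> bool list set" where
  "A2 m k d = {x. length x = m \<and> is_wwl d k x}"

definition clog2 :: "nat \<Rightarrow> nat" where
  "clog2 d = nat \<lceil>log 2 (real d)\<rceil>"

definition ell :: "nat \<Rightarrow> nat" where
  "ell d = d * clog2 d + d"

definition u_i :: "nat \<Rightarrow> nat \<Rightarrow> bool list" where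
  "u_i d i = take d (concat (replicate d (replicate (2^i) True @ replicate (2^i) False)))"

definition u_vec :: "nat \<Rightarrow> bool list" where
  "u_vec d = replicate d True @ concat (map (u_i d) [0..<clog2 d])"

definition red :: "nat \<Rightarrow> bool list set \<Rightarrow> real" where
  "red n A = real n - log 2 (real (card A))"

definition C2 :: "nat \<Rightarrow> nat \<Rightarrow> nat \<Rightarrow> bool list set" where
  "C2 n k d = (\<lambda>c. replicate k False @ u_vec d @ replicate d True @ c @ replicate d True)
      ` A2 (n - k - ell d - 2 * d) k d"

definition admissible_k :: "nat \<Rightarrow> nat \<Rightarrow> nat set" where
  "admissible_k d n = {k. ell d \<le> k \<and> k + ell d + 2 * d \<le> n}"

definition min_red :: "nat \<Rightarrow> nat \<Rightarrow> real" where
  "min_red d n = Min ((\<lambda>k. red n (C2 n k d)) ` admissible_k d n)"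

end

theory Submission
  imports Defs "HOL-Real_Asymp.Real_Asymp"
begin

definition bl :: "nat \<Rightarrow> bool list set" where "bl n = {xs. length xs = n}"
definition Wt :: "nat \<Rightarrow> nat \<Rightarrow> bool list set" where "Wt k j = {w. length w = k \<and> hweight w = j}"

lemma hweight_simps[simp]: "hweight [] = 0" "hweight (True # w) = Suc (hweight w)"
  "hweight (False # w) = hweight w" "hweight (x @ y) = hweight x + hweight y"
  "hweight (replicate n False) = 0" "hweight (replicate n True) = n"
  by (auto simp: hweight_def)

lemma hweight_le: "hweight w \<le> length w" by (simp add: hweight_def)

lemma bl_finite[simp]: "finite (bl n)"
proof -
  have "bl n = {xs. set xs \<subseteq> UNIV \<and> length xs = n}" by (auto simp: bl_def)
  thus ?thesis using finite_lists_length_eq[of "UNIV::bool set" n] by simp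
qed

lemma card_bl: "card (bl n) = 2 ^ n"
proof -
  have "bl n = {xs. set xs \<subseteq> UNIV \<and> length xs = n}" by (auto simp: bl_def)
  thus ?thesis using card_lists_length_eq[of "UNIV::bool set" n] by simp
qed

lemma Wt_sub: "Wt k j \<subseteq> bl k" by (auto simp: Wt_def bl_def)
lemma Wt_finite[simp]: "finite (Wt k j)" using Wt_sub bl_finite finite_subset by blast

lemma card_Wt: "card (Wt k j) = k choose j"
proof (induction k arbitrary: j)
  case 0
  have "Wt 0 j = (if j = 0 then {[]} else {})" by (auto simp: Wt_def)
  thus ?case by simp
next
  case (Suc k)
  show ?case
  proof (cases j)
    case 0
    have "Wt (Suc k) 0 = Cons False ` Wt k 0"
    proof (rule set_eqI)
      fix w show "w \<in> Wt (Suc k) 0 \<longleftrightarrow> w \<in> Cons False ` Wt k 0"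
        by (cases w) (auto simp: Wt_def hweight_def)
    qed
    moreover have "card (Cons False ` Wt k 0) = card (Wt k 0)" by (rule card_image) simp
    ultimately show ?thesis using Suc 0 by simp
  next
    case (Suc j')
    have e: "Wt (Suc k) j = Cons False ` Wt k j \<union> Cons True ` Wt k j'"
    proof (rule set_eqI)
      fix w show "w \<in> Wt (Suc k) j \<longleftrightarrow> w \<in> Cons False ` Wt k j \<union> Cons True ` Wt k j'"
      proof (cases w)
        case Nil then show ?thesis by (auto simp: Wt_def)
      next
        case (Cons a v) then show ?thesis using Suc by (cases a) (auto simp: Wt_def)
      qed
    qed
    have "card (Wt (Suc k) j) = card (Cons False ` Wt k j) + card (Cons True ` Wt k j')"
      unfolding e by (rule card_Un_disjoint) auto
    also have "\<dots> = card (Wt k j) + card (Wt k j')" by (simp add: card_image)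
    finally show ?thesis using Suc.IH Suc by simp
  qed
qed


lemma wwl_take: assumes "is_wwl d k x" shows "is_wwl d k (take a x)"
proof (cases "length x < k")
  case True thus ?thesis by (simp add: is_wwl_def)
next
  case False
  hence H: "\<forall>i. i + k \<le> length x \<longrightarrow> d \<le> hweight (take k (drop i x))"
    using assms by (simp add: is_wwl_def)
  show ?thesis unfolding is_wwl_def
  proof (intro disjI2 allI impI)
    fix i assume "i + k \<le> length (take a x)"
    hence "take k (drop i (take a x)) = take k (drop i x)" and "i + k \<le> length x"
      by (auto simp: drop_take take_take min_def split: if_splits)
    thus "d \<le> hweight (take k (drop i (take a x)))" using H by simp
  qed
qed

lemma wwl_drop: assumes "is_wwl d k x" shows "is_wwl d k (drop a x)"
proof (cases "length x < k")
  case True hence "length (drop a x) < k" by simp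
  thus ?thesis by (simp add: is_wwl_def)
next
  case False
  hence H: "\<forall>i. i + k \<le> length x \<longrightarrow> d \<le> hweight (take k (drop i x))"
    using assms by (simp add: is_wwl_def)
  show ?thesis unfolding is_wwl_def
  proof (intro disjI2 allI impI)
    fix i assume i: "i + k \<le> length (drop a x)"
    show "d \<le> hweight (take k (drop i (drop a x)))"
    proof (cases "a \<le> length x")
      case True
      hence "a + i + k \<le> length x" using i by simp
      from H[rule_format, OF this] show ?thesis by (simp add: add.commute)
    next
      case False
      hence "k = 0" using i by simp
      thus ?thesis using H[rule_format, of 0] by simp
    qed
  qed
qed

lemma A2_sub: "A2 m k d \<subseteq> bl m" by (auto simp: A2_def bl_def)
lemma A2_finite[simp]: "finite (A2 m k d)" by (rule finite_subset[OF A2_sub bl_finite])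
lemma A2_card_le: "card (A2 m k d) \<le> 2 ^ m"
proof -
  have "card (A2 m k d) \<le> card (bl m)" by (rule card_mono[OF bl_finite A2_sub])
  thus ?thesis by (simp add: card_bl)
qed

lemma A2_nonempty: assumes "d \<le> k" shows "replicate m True \<in> A2 m k d"
proof -
  have "take k (drop i (replicate m True)) = replicate k True" if "i + k \<le> m" for i
    using that by (simp add: min_def)
  thus ?thesis using assms by (auto simp: A2_def is_wwl_def)
qed

lemma A2_card_pos: "d \<le> k \<Longrightarrow> card (A2 m k d) > 0"
  using A2_nonempty[of d k m] by (auto simp: card_gt_0_iff)

lemma A2_mono_k: "k \<le> k' \<Longrightarrow> A2 m k d \<subseteq> A2 m k' d"
proof
  fix x assume kk: "k \<le> k'" and x: "x \<in> A2 m k d"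
  show "x \<in> A2 m k' d"
  proof (cases "length x < k'")
    case True thus ?thesis using x by (auto simp: A2_def is_wwl_def)
  next
    case False
    { fix i assume i: "i + k' \<le> length x"
      hence "d \<le> hweight (take k (drop i x))" using x kk by (auto simp: A2_def is_wwl_def)
      also have "take k' (drop i x) = take k (drop i x) @ take (k' - k) (drop (i + k) x)"
        using kk by (metis add.commute drop_drop le_add_diff_inverse take_add)
      hence "hweight (take k (drop i x)) \<le> hweight (take k' (drop i x))" by simp
      finally have "d \<le> hweight (take k' (drop i x))" . }
    thus ?thesis using x by (auto simp: A2_def is_wwl_def)
  qed
qed

lemma A2_card_mono_k: "k \<le> k' \<Longrightarrow> card (A2 m k d) \<le> card (A2 m k' d)"
  by (rule card_mono[OF A2_finite A2_mono_k])


lemma A2_prod: "card (A2 (a + b) k d) \<le> card (A2 a k d) * card (A2 b k d)"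
proof -
  have "A2 (a + b) k d \<subseteq> (\<lambda>(u, v). u @ v) ` (A2 a k d \<times> A2 b k d)"
  proof
    fix x assume x: "x \<in> A2 (a + b) k d"
    hence "take a x \<in> A2 a k d" "drop a x \<in> A2 b k d"
      by (auto simp: A2_def wwl_take wwl_drop)
    thus "x \<in> (\<lambda>(u, v). u @ v) ` (A2 a k d \<times> A2 b k d)"
      by (intro image_eqI[where x="(take a x, drop a x)"]) auto
  qed
  hence "card (A2 (a + b) k d) \<le> card ((\<lambda>(u, v). u @ v) ` (A2 a k d \<times> A2 b k d))"
    by (intro card_mono finite_imageI) auto
  also have "\<dots> \<le> card (A2 a k d \<times> A2 b k d)" by (intro card_image_le) auto
  finally show ?thesis by (simp add: card_cartesian_product)
qed

lemma A2_blocks: "card (A2 (q * L + r) k d) \<le> card (A2 L k d) ^ q * 2 ^ r"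
proof (induction q)
  case 0 thus ?case using A2_card_le by simp
next
  case (Suc q)
  have "card (A2 (Suc q * L + r) k d) = card (A2 (L + (q * L + r)) k d)" by (simp add: add.assoc)
  also have "\<dots> \<le> card (A2 L k d) * card (A2 (q * L + r) k d)" by (rule A2_prod)
  also have "\<dots> \<le> card (A2 L k d) * (card (A2 L k d) ^ q * 2 ^ r)"
    using Suc.IH by (intro mult_left_mono) auto
  finally show ?case by (simp add: mult.assoc)
qed


definition Bk :: "nat \<Rightarrow> nat \<Rightarrow> bool list set" where
  "Bk k d = {w. length w = k \<and> hweight w < d}"

lemma Bk_eq: "Bk k d = (\<Union>j<d. Wt k j)" by (auto simp: Bk_def Wt_def)

lemma Bk_finite[simp]: "finite (Bk k d)" unfolding Bk_eq by simp

lemma card_Bk: "card (Bk k d) = (\<Sum>j<d. k choose j)"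
proof -
  have "card (\<Union>j<d. Wt k j) = (\<Sum>j<d. card (Wt k j))"
    apply (rule card_UN_disjoint)
      apply simp
     apply simp
    apply (auto simp: Wt_def)
    done
  thus ?thesis by (simp add: Bk_eq card_Wt)
qed

lemma card_Bk_le: "k \<ge> 1 \<Longrightarrow> card (Bk k d) \<le> d * k ^ (d - 1)"
proof -
  assume k: "k \<ge> 1"
  have "(\<Sum>j<d. k choose j) \<le> (\<Sum>j<d. k ^ (d - 1))"
  proof (rule sum_mono)
    fix j assume j: "j \<in> {..<d}"
    show "k choose j \<le> k ^ (d - 1)"
    proof (cases "j \<le> k")
      case True
      hence "k choose j \<le> k ^ j" by (rule binomial_le_pow)
      also have "\<dots> \<le> k ^ (d - 1)" using j k by (intro power_increasing) auto
      finally show ?thesis .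
    next
      case False thus ?thesis by (simp add: binomial_eq_0)
    qed
  qed
  thus ?thesis by (simp add: card_Bk)
qed

lemma union_bound:
  assumes k: "k \<ge> 1"
  shows "2 ^ k * card (bl m - A2 m k d) \<le> m * card (Bk k d) * 2 ^ m"
proof -
  define T where "T i = (\<lambda>(a, w, b). a @ w @ b) ` (bl i \<times> Bk k d \<times> bl (m - i - k))" for i
  define I where "I = {i. i + k \<le> m}"
  have sub: "bl m - A2 m k d \<subseteq> (\<Union>i\<in>I. T i)"
  proof
    fix x assume x: "x \<in> bl m - A2 m k d"
    then obtain i where i: "i + k \<le> m" "hweight (take k (drop i x)) < d" and lx: "length x = m"
      by (auto simp: bl_def A2_def is_wwl_def not_le)
    have "x = take i x @ take k (drop i x) @ drop (i + k) x"
      by (metis append_take_drop_id drop_drop add.commute)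
    moreover have "take i x \<in> bl i" "take k (drop i x) \<in> Bk k d" "drop (i + k) x \<in> bl (m - i - k)"
      using i lx by (auto simp: bl_def Bk_def)
    ultimately have "x \<in> T i" unfolding T_def by force
    thus "x \<in> (\<Union>i\<in>I. T i)" using i by (auto simp: I_def)
  qed
  have fI: "finite I" unfolding I_def by (rule finite_subset[of _ "{..m}"]) auto
  have cI: "card I \<le> m"
  proof -
    have "I \<subseteq> {..<m}" using k by (auto simp: I_def)
    thus ?thesis using card_mono[of "{..<m}" I] by simp
  qed
  have cT: "2 ^ k * card (T i) \<le> card (Bk k d) * 2 ^ m" if "i \<in> I" for i
  proof -
    have "card (T i) \<le> card (bl i \<times> Bk k d \<times> bl (m - i - k))"
      unfolding T_def by (intro card_image_le finite_cartesian_product bl_finite Bk_finite)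
    also have "\<dots> = 2 ^ i * card (Bk k d) * 2 ^ (m - i - k)" by (simp add: card_cartesian_product card_bl)
    finally have "2 ^ k * card (T i) \<le> card (Bk k d) * (2 ^ i * 2 ^ (m - i - k) * 2 ^ k)"
      by (simp add: algebra_simps)
    also have "2 ^ i * 2 ^ (m - i - k) * 2 ^ k = (2::nat) ^ m"
      using that by (simp add: I_def flip: power_add)
    finally show ?thesis .
  qed
  have fT: "finite (T i)" for i unfolding T_def
    by (intro finite_imageI finite_cartesian_product bl_finite Bk_finite)
  have "2 ^ k * card (bl m - A2 m k d) \<le> 2 ^ k * card (\<Union>i\<in>I. T i)"
    using sub by (intro mult_left_mono card_mono) (auto simp: fI fT)
  also have "\<dots> \<le> 2 ^ k * (\<Sum>i\<in>I. card (T i))" by (intro mult_left_mono card_UN_le fI) auto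
  also have "\<dots> = (\<Sum>i\<in>I. 2 ^ k * card (T i))" by (simp add: sum_distrib_left)
  also have "\<dots> \<le> (\<Sum>i\<in>I. card (Bk k d) * 2 ^ m)" by (rule sum_mono) (rule cT)
  also have "\<dots> = card I * card (Bk k d) * 2 ^ m" by simp
  also have "\<dots> \<le> m * card (Bk k d) * 2 ^ m" using cI by simp
  finally show ?thesis .
qed


lemma hweight_take_prefix: "length u \<le> k \<Longrightarrow> hweight u \<le> hweight (take k (u @ v))"
  by (simp add: take_append)

definition phi :: "nat \<Rightarrow> nat \<Rightarrow> nat \<Rightarrow> bool list \<times> bool list \<times> bool list \<Rightarrow> bool list" where
  "phi k h j = (\<lambda>(a, w, b). a @ [True] @ w @ replicate (k - h) False @ b)"

definition S :: "nat \<Rightarrow> nat \<Rightarrow> nat \<Rightarrow> nat \<Rightarrow> bool list set" where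
  "S k h D j = phi k h j ` (bl (j - 1) \<times> Wt h D \<times> bl (h - j))"

lemma phi_window:
  assumes "length a = j - 1" "length w = h" "1 \<le> j" "h \<le> k"
  shows "take k (drop j (phi k h j (a, w, b))) = w @ replicate (k - h) False"
proof -
  have "drop j (phi k h j (a, w, b)) = w @ replicate (k - h) False @ b"
    using assms by (simp add: phi_def)
  thus ?thesis using assms by (simp add: take_append)
qed

lemma S_sub: assumes "1 \<le> j" "j \<le> h" "h \<le> k" shows "S k h D j \<subseteq> bl (k + h)"
  using assms by (auto simp: S_def phi_def bl_def Wt_def)

lemma S_mem: assumes "x \<in> S k h D j"
  shows "\<exists>a w b. x = phi k h j (a, w, b) \<and> length a = j - 1 \<and> length w = h \<and> hweight w = D"
proof -
  from assms obtain t where t: "t \<in> bl (j - 1) \<times> Wt h D \<times> bl (h - j)" and x: "x = phi k h j t"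
    unfolding S_def by blast
  obtain a w b where "t = (a, w, b)" by (cases t) blast
  thus ?thesis using t x by (auto simp: bl_def Wt_def)
qed

lemma S_notA2:
  assumes "1 \<le> j" "j \<le> h" "h \<le> k" "Suc D = d"
  shows "S k h D j \<inter> A2 (k + h) k d = {}"
proof (rule ccontr)
  assume "S k h D j \<inter> A2 (k + h) k d \<noteq> {}"
  then obtain x where x1: "x \<in> S k h D j" and x2: "x \<in> A2 (k + h) k d" by blast
  from S_mem[OF x1] obtain a w b where a: "length a = j - 1" and w: "length w = h" "hweight w = D"
    and xe: "x = phi k h j (a, w, b)" by blast
  have x: "phi k h j (a, w, b) \<in> A2 (k + h) k d" using x2 xe by simp
  have l: "length (phi k h j (a, w, b)) = k + h" using x by (simp add: A2_def)
  have "j + k \<le> length (phi k h j (a, w, b))" using l assms by simp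
  hence "d \<le> hweight (take k (drop j (phi k h j (a, w, b))))"
    using x assms by (auto simp: A2_def is_wwl_def)
  also have "\<dots> = D" using phi_window[OF a w(1)] assms w by simp
  finally show False using assms by simp
qed

lemma S_disj:
  assumes j: "1 \<le> j" "j < j'" "j' \<le> h" "2 * h \<le> k" "Suc D = d"
  shows "S k h D j \<inter> S k h D j' = {}"
proof (rule ccontr)
  assume "S k h D j \<inter> S k h D j' \<noteq> {}"
  then obtain x where x1: "x \<in> S k h D j" and x2: "x \<in> S k h D j'" by blast
  from S_mem[OF x1] obtain a w b where a: "length a = j - 1" and w: "length w = h" "hweight w = D"
    and xe: "x = phi k h j (a, w, b)" by blast
  from S_mem[OF x2] obtain a' w' b' where a': "length a' = j' - 1" and w': "length w' = h" "hweight w' = D"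
    and xe': "x = phi k h j' (a', w', b')" by blast
  have eq: "phi k h j (a, w, b) = phi k h j' (a', w', b')" using xe xe' by simp
  have "hweight (take k (drop j (phi k h j (a, w, b)))) = D"
    using phi_window[OF a w(1)] j w by simp
  moreover
  have de: "drop j (phi k h j' (a', w', b')) = (drop j a' @ [True] @ w') @ replicate (k - h) False @ b'"
    using a' j by (simp add: phi_def)
  have L: "length (drop j a' @ [True] @ w') \<le> k" using a' w' j by simp
  have "hweight (drop j a' @ [True] @ w') \<le> hweight (take k (drop j (phi k h j' (a', w', b'))))"
    unfolding de by (rule hweight_take_prefix[OF L])
  hence "Suc D \<le> hweight (take k (drop j (phi k h j' (a', w', b'))))" using w' by simp
  ultimately show False using eq by simp
qed

lemma card_S:
  assumes "1 \<le> j" "j \<le> h"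
  shows "card (S k h D j) = 2 ^ (h - 1) * (h choose D)"
proof -
  have "inj_on (phi k h j) (bl (j - 1) \<times> Wt h D \<times> bl (h - j))"
  proof (rule inj_onI)
    fix t t' assume t: "t \<in> bl (j - 1) \<times> Wt h D \<times> bl (h - j)"
      and t': "t' \<in> bl (j - 1) \<times> Wt h D \<times> bl (h - j)" and e: "phi k h j t = phi k h j t'"
    obtain a w b where tt: "t = (a, w, b)" by (cases t) blast
    obtain a' w' b' where tt': "t' = (a', w', b')" by (cases t') blast
    have la: "length a = length a'" and lw: "length w = length w'"
      using t t' tt tt' by (auto simp: bl_def Wt_def)
    have "a @ ([True] @ w @ replicate (k - h) False @ b) = a' @ ([True] @ w' @ replicate (k - h) False @ b')"
      using e tt tt' by (simp add: phi_def)
    hence 1: "a = a'" and "w @ (replicate (k - h) False @ b) = w' @ (replicate (k - h) False @ b')"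
      using la by (simp_all add: append_eq_append_conv)
    hence "w = w'" "b = b'" using lw by (simp_all add: append_eq_append_conv)
    thus "t = t'" using 1 tt tt' by simp
  qed
  hence "card (S k h D j) = card (bl (j - 1) \<times> Wt h D \<times> bl (h - j))"
    unfolding S_def by (rule card_image)
  also have "\<dots> = 2 ^ (j - 1) * (h choose D) * 2 ^ (h - j)"
    by (simp add: card_cartesian_product card_bl card_Wt)
  also have "\<dots> = 2 ^ (j - 1 + (h - j)) * (h choose D)" by (simp only: power_add ac_simps)
  also have "j - 1 + (h - j) = h - 1" using assms by simp
  finally show ?thesis by simp
qed

lemma card_A2_block:
  assumes "2 * h \<le> k" "Suc D = d"
  shows "card (A2 (k + h) k d) + h * (2 ^ (h - 1) * (h choose D)) \<le> 2 ^ (k + h)"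
proof -
  let ?U = "\<Union>j\<in>{1..h}. S k h D j"
  have fS: "finite (S k h D j)" for j unfolding S_def
    by (intro finite_imageI finite_cartesian_product bl_finite Wt_finite)
  have cU: "card ?U = h * (2 ^ (h - 1) * (h choose D))"
  proof -
    have "card ?U = (\<Sum>j\<in>{1..h}. card (S k h D j))"
    proof (rule card_UN_disjoint)
      show "\<forall>i\<in>{1..h}. \<forall>j\<in>{1..h}. i \<noteq> j \<longrightarrow> S k h D i \<inter> S k h D j = {}"
      proof (intro ballI impI)
        fix i j assume i: "i \<in> {1..h}" and j: "j \<in> {1..h}" and ij: "i \<noteq> j"
        show "S k h D i \<inter> S k h D j = {}"
        proof (cases "i < j")
          case True thus ?thesis using S_disj[of i j h k D d] i j assms by auto
        next
          case False hence "j < i" using ij by simp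
          thus ?thesis using S_disj[of j i h k D d] i j assms by auto
        qed
      qed
    qed (auto simp: fS)
    also have "\<dots> = (\<Sum>j\<in>{1..h}. 2 ^ (h - 1) * (h choose D))"
      by (rule sum.cong) (auto simp: card_S)
    finally show ?thesis by simp
  qed
  have sub1: "?U \<subseteq> bl (k + h)"
  proof (rule UN_least)
    fix j assume "j \<in> {1..h}"
    thus "S k h D j \<subseteq> bl (k + h)" using assms by (intro S_sub) auto
  qed
  have sub2: "A2 (k + h) k d \<subseteq> bl (k + h) - ?U"
  proof
    fix x assume x: "x \<in> A2 (k + h) k d"
    have "x \<notin> S k h D j" if "j \<in> {1..h}" for j
      using S_notA2[of j h k D d] that assms x by auto
    thus "x \<in> bl (k + h) - ?U" using x A2_sub by blast
  qed
  have "card (A2 (k + h) k d) \<le> card (bl (k + h) - ?U)"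
    by (rule card_mono[OF _ sub2]) simp
  also have "\<dots> = card (bl (k + h)) - card ?U"
    by (rule card_Diff_subset[OF _ sub1]) (auto simp: fS)
  finally show ?thesis using cU card_bl[of "k + h"] card_mono[OF bl_finite sub1] by simp
qed


definition rA :: "nat \<Rightarrow> nat \<Rightarrow> nat \<Rightarrow> real" where
  "rA m k d = real m - log 2 (real (card (A2 m k d)))"

lemma rA_nonneg: assumes "d \<le> k" shows "rA m k d \<ge> 0"
proof -
  have p: "real (card (A2 m k d)) > 0" using A2_card_pos[OF assms] by simp
  have le: "real (card (A2 m k d)) \<le> 2 ^ m" using A2_card_le[of m k d]
    by (metis of_nat_le_iff of_nat_numeral of_nat_power)
  have "log 2 (real (card (A2 m k d))) \<le> log 2 (2 ^ m)" by (rule log_mono[OF _ p le]) simp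
  thus ?thesis by (simp add: rA_def)
qed

lemma rA_mono_k: assumes "d \<le> k" "k \<le> k'" shows "rA m k' d \<le> rA m k d"
proof -
  have p: "real (card (A2 m k d)) > 0" using A2_card_pos[OF assms(1)] by simp
  have "real (card (A2 m k d)) \<le> real (card (A2 m k' d))"
    using A2_card_mono_k[OF assms(2)] by simp
  hence "log 2 (real (card (A2 m k d))) \<le> log 2 (real (card (A2 m k' d)))" by (intro log_mono p) simp_all
  thus ?thesis by (simp add: rA_def)
qed

lemma rA_upper:
  assumes k: "1 \<le> k" "d \<le> k" and B: "2 * m * card (Bk k d) \<le> 2 ^ k"
  shows "rA m k d \<le> 1"
proof -
  have u: "2 ^ k * card (bl m - A2 m k d) \<le> m * card (Bk k d) * 2 ^ m" by (rule union_bound[OF k(1)])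
  have c: "card (bl m - A2 m k d) = 2 ^ m - card (A2 m k d)"
    using card_Diff_subset[OF A2_finite A2_sub] card_bl by simp
  have le: "card (A2 m k d) \<le> 2 ^ m" by (rule A2_card_le)
  have "2 ^ k * (2 ^ m - card (A2 m k d)) * 2 \<le> 2 ^ k * 2 ^ m"
  proof -
    have "2 ^ k * (2 ^ m - card (A2 m k d)) * 2 \<le> m * card (Bk k d) * 2 ^ m * 2"
      using u c by simp
    also have "\<dots> = (2 * m * card (Bk k d)) * 2 ^ m" by simp
    also have "\<dots> \<le> 2 ^ k * 2 ^ m" using B by (intro mult_right_mono) auto
    finally show ?thesis .
  qed
  hence "(2 ^ m - card (A2 m k d)) * 2 \<le> (2::nat) ^ m" by simp
  hence "2 ^ m \<le> 2 * card (A2 m k d)" using le by linarith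
  hence "real (2 ^ m) \<le> real (2 * card (A2 m k d))" by (simp only: of_nat_le_iff)
  hence r: "2 ^ m \<le> 2 * real (card (A2 m k d))" by simp
  have p: "real (card (A2 m k d)) > 0" using A2_card_pos[OF k(2)] by simp
  have "log 2 (2 ^ m) \<le> log 2 (2 * real (card (A2 m k d)))" by (intro log_mono r) simp_all
  also have "\<dots> = 1 + log 2 (real (card (A2 m k d)))" using p by (simp add: log_mult_pos)
  finally show ?thesis by (simp add: rA_def)
qed

lemma rA_lower:
  assumes d: "Suc D = d" and h: "h = k div 2" "1 \<le> h" and dk: "d \<le> k"
  shows "real (m div (k + h)) * (real h * real (h choose D) / 2 ^ (k + 1)) \<le> rA m k d"
proof -
  define L where "L = k + h"
  define q where "q = m div L"
  define r where "r = m mod L"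
  define p where "p = real h * real (h choose D) / 2 ^ (k + 1)"
  have m: "m = q * L + r" by (simp add: q_def r_def)
  have blk: "card (A2 L k d) + h * (2 ^ (h - 1) * (h choose D)) \<le> 2 ^ L"
    unfolding L_def by (rule card_A2_block) (use h d in auto)
  have cLpos: "real (card (A2 L k d)) > 0" using A2_card_pos[OF dk] by simp
  have "real (card (A2 L k d) + h * (2 ^ (h - 1) * (h choose D))) \<le> real (2 ^ L)"
    using blk by (simp only: of_nat_le_iff)
  hence "real (card (A2 L k d)) + real h * (2 ^ (h - 1) * real (h choose D)) \<le> 2 ^ L"
    by simp
  moreover have "real h * (2 ^ (h - 1) * real (h choose D)) = 2 ^ L * p"
  proof -
    have "L = (h - 1) + (k + 1)" using h by (simp add: L_def)
    hence "(2::real) ^ L = 2 ^ (h - 1) * 2 ^ (k + 1)" by (simp only: power_add)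
    thus ?thesis by (simp add: p_def field_simps)
  qed
  ultimately have cL: "real (card (A2 L k d)) \<le> 2 ^ L * (1 - p)" by (simp add: algebra_simps)
  have p0: "0 \<le> p" by (simp add: p_def)
  have p1: "p < 1"
  proof -
    have "0 < 2 ^ L * (1 - p)" using cL cLpos by linarith
    thus ?thesis by (simp add: zero_less_mult_iff)
  qed
  have lcL: "log 2 (real (card (A2 L k d))) \<le> real L - p"
  proof -
    have "log 2 (real (card (A2 L k d))) \<le> log 2 (2 ^ L * (1 - p))" by (intro log_mono cL cLpos) simp
    also have "\<dots> = real L + log 2 (1 - p)" using p1 by (simp add: log_mult_pos)
    also have "log 2 (1 - p) \<le> - p"
    proof -
      have "ln (1 - p) \<le> - p" by (rule ln_one_minus_pos_upper_bound[OF p0 p1])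
      moreover have "ln 2 \<le> (1::real)" using ln_2_less_1 by simp
      moreover have "ln 2 > (0::real)" by simp
      ultimately have "ln (1 - p) / ln 2 \<le> - p"
      proof -
        assume a: "ln (1 - p) \<le> - p" "ln 2 \<le> (1::real)" "ln 2 > (0::real)"
        have "ln 2 * p \<le> p" using a p0 by (intro mult_left_le_one_le) auto
        hence "- p * ln 2 \<ge> - p" by (simp add: mult.commute)
        hence "ln (1 - p) \<le> - p * ln 2" using a by linarith
        thus ?thesis using a by (simp add: divide_le_eq)
      qed
      thus ?thesis by (simp add: log_def)
    qed
    finally show ?thesis by simp
  qed
  have cA: "real (card (A2 m k d)) \<le> real (card (A2 L k d)) ^ q * 2 ^ r"
  proof -
    have "real (card (A2 m k d)) \<le> real (card (A2 L k d) ^ q * 2 ^ r)"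
      using A2_blocks[of q L r k d] m by (simp only: of_nat_le_iff)
    thus ?thesis by simp
  qed
  have cApos: "real (card (A2 m k d)) > 0" using A2_card_pos[OF dk] by simp
  have "log 2 (real (card (A2 m k d))) \<le> log 2 (real (card (A2 L k d)) ^ q * 2 ^ r)"
    by (intro log_mono cA cApos) simp
  also have "\<dots> = real q * log 2 (real (card (A2 L k d))) + real r"
    using cLpos by (simp add: log_mult_pos log_nat_power)
  also have "\<dots> \<le> real q * (real L - p) + real r" using lcL by (intro add_right_mono mult_left_mono) auto
  finally have "log 2 (real (card (A2 m k d))) \<le> real q * (real L - p) + real r" .
  moreover have "real m = real q * real L + real r" using m by simp
  ultimately have "real q * p \<le> rA m k d" by (simp add: rA_def algebra_simps)
  thus ?thesis by (simp add: q_def L_def p_def)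
qed


lemma LB:
  fixes N :: real
  assumes d: "Suc D = d" and k3: "3 \<le> k" and Dk: "2 * D \<le> k" and dk: "d \<le> k"
    and m: "N / 2 \<le> real m" and kN: "6 * real k \<le> N"
  shows "N * real k ^ D / (36 * (3 * real D) ^ D * 2 ^ k) \<le> rA m k d"
proof -
  define h where "h = k div 2"
  define L where "L = k + h"
  define q where "q = m div L"
  have h1: "1 \<le> h" using k3 by (simp add: h_def)
  have hk: "real k / 3 \<le> real h"
  proof -
    have "k \<le> 2 * h + 1" by (simp add: h_def)
    thus ?thesis using k3 by linarith
  qed
  have Dh: "D \<le> h" using Dk by (simp add: h_def)
  have L: "real L \<le> 3 * real k / 2"
  proof -
    have "2 * h \<le> k" by (simp add: h_def)
    thus ?thesis by (simp add: L_def)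
  qed
  have Lpos: "real L > 0" using k3 by (simp add: L_def)
  have kpos: "real k > 0" using k3 by simp
  have main: "real q * (real h * real (h choose D) / 2 ^ (k + 1)) \<le> rA m k d"
    unfolding q_def L_def by (rule rA_lower[OF d h_def h1 dk])
  have q1: "N / (6 * real k) \<le> real q"
  proof -
    have "m < (q + 1) * L" using Lpos unfolding q_def
      by (metis add.commute dividend_less_div_times less_nat_zero_code mult.commute mult_Suc
                nat_neq_iff of_nat_0_less_iff plus_1_eq_Suc)
    hence "real m < (real q + 1) * real L" by (metis of_nat_1 of_nat_add of_nat_less_iff of_nat_mult)
    hence "real m / real L < real q + 1" using Lpos by (simp add: divide_less_eq)
    moreover have "N / (3 * real k) \<le> real m / real L"
    proof -
      have "N / (3 * real k) = (N / 2) / (3 * real k / 2)" by simp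
      also have "\<dots> \<le> real m / (3 * real k / 2)" using m kpos by (intro divide_right_mono) auto
      also have "\<dots> \<le> real m / real L" using L Lpos by (intro divide_left_mono) auto
      finally show ?thesis .
    qed
    moreover have "1 \<le> N / (6 * real k)" using kN kpos by simp
    ultimately show ?thesis by (simp add: field_simps)
  qed
  have C: "(real k / (3 * real D)) ^ D \<le> real (h choose D)"
  proof (cases "D = 0")
    case True thus ?thesis by simp
  next
    case False
    have "(real k / (3 * real D)) ^ D \<le> (real h / real D) ^ D"
      using hk False by (intro power_mono) (auto simp: field_simps)
    also have "\<dots> \<le> real (h choose D)" by (rule binomial_ge_n_over_k_pow_k[OF Dh])
    finally show ?thesis .
  qed
  have p2: "real k / 3 * (real k / (3 * real D)) ^ D / 2 ^ (k + 1) \<le> real h * real (h choose D) / 2 ^ (k + 1)"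
    using hk C by (intro divide_right_mono mult_mono) auto
  have "N / (6 * real k) * (real k / 3 * (real k / (3 * real D)) ^ D / 2 ^ (k + 1))
        \<le> real q * (real h * real (h choose D) / 2 ^ (k + 1))"
    using q1 p2 kN kpos by (intro mult_mono) auto
  also note main
  finally have *: "N / (6 * real k) * (real k / 3 * (real k / (3 * real D)) ^ D / 2 ^ (k + 1)) \<le> rA m k d" .
  have "N / (6 * real k) * (real k / 3 * (real k / (3 * real D)) ^ D / 2 ^ (k + 1))
      = N * real k ^ D / (36 * (3 * real D) ^ D * 2 ^ k)"
    using kpos by (simp add: power_divide field_simps)
  thus ?thesis using * by simp
qed


lemma ell_ge: "d \<le> ell d" by (simp add: ell_def)

lemma adm_dk: "k \<in> admissible_k d n \<Longrightarrow> d \<le> k"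
  using ell_ge[of d] by (simp add: admissible_k_def)

lemma R_eq:
  assumes "k \<in> admissible_k d n"
  shows "red n (C2 n k d) = real k + real (ell d + 2 * d) + rA (n - k - ell d - 2 * d) k d"
proof -
  define m where "m = n - k - ell d - 2 * d"
  have n: "n = k + (ell d + 2 * d) + m" using assms by (simp add: admissible_k_def m_def)
  have inj: "inj_on (\<lambda>c. replicate k False @ u_vec d @ replicate d True @ c @ replicate d True) (A2 m k d)"
    by (rule inj_onI) simp
  have "card (C2 n k d) = card (A2 m k d)"
    unfolding C2_def m_def[symmetric] by (rule card_image[OF inj])
  thus ?thesis by (simp add: red_def rA_def m_def[symmetric] n)
qed

lemma powr_f:
  assumes "n > 0" "lg = log 2 (real n)" "lg > 0"
  shows "2 powr (lg + real D * log 2 lg) = real n * lg ^ D"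
proof -
  have "2 powr (lg + real D * log 2 lg) = 2 powr lg * (2 powr (log 2 lg)) powr real D"
    by (simp add: powr_add powr_powr mult.commute)
  also have "\<dots> = real n * lg powr real D" using assms by simp
  also have "lg powr real D = lg ^ D" using assms by (simp add: powr_realpow)
  finally show ?thesis .
qed

lemma upper_k0:
  assumes dD: "Suc D = d" and E: "E = ell d + 2 * d" and lg: "lg = log 2 (real n)"
    and f: "f = lg + real D * log 2 lg"
    and e1: "1 \<le> lg" "real (ell d) \<le> lg" and e2: "real D * log 2 lg + 1 + 2 * real d \<le> lg"
    and e3: "2 * lg + real E \<le> real n"
  shows "\<exists>k\<in>admissible_k d n. red n (C2 n k d) \<le> f + real (2 * d + E + 2)"
proof -
  have npos: "n > 0" using e1 lg by (cases "n = 0") (auto simp: log_def)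
  have llg: "0 \<le> log 2 lg" using e1 by simp
  have flg: "lg \<le> f" using f llg by simp
  define k0 where "k0 = nat \<lceil>f\<rceil> + 2 * d"
  have fk0: "f + 2 * real d \<le> real k0" using flg e1 by (simp add: k0_def)
  have k0f: "real k0 \<le> f + 1 + 2 * real d" using flg e1 by (simp add: k0_def)
  have k0lg: "real k0 \<le> 2 * lg" using k0f e2 f by simp
  have adm: "k0 \<in> admissible_k d n"
  proof -
    have "ell d \<le> k0" using e1 flg fk0 by simp
    moreover have "real (k0 + ell d + 2 * d) \<le> real n" using k0lg e3 E by simp
    ultimately show ?thesis by (simp add: admissible_k_def del: of_nat_add)
  qed
  define m where "m = n - k0 - ell d - 2 * d"
  have mn: "m \<le> n" by (simp add: m_def)
  have k01: "1 \<le> k0" "d \<le> k0" using dD by (auto simp: k0_def)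
  have cB: "real (card (Bk k0 d)) \<le> real d * real k0 ^ D"
    using card_Bk_le[OF k01(1), of d] dD by (metis diff_Suc_1 of_nat_le_iff of_nat_mult of_nat_power)
  have "2 * real m * real (card (Bk k0 d)) \<le> 2 * real n * (real d * real k0 ^ D)"
    using mn cB by (intro mult_mono) auto
  also have "\<dots> \<le> 2 * real n * (real d * (2 * lg) ^ D)"
    using k0lg by (intro mult_left_mono power_mono) auto
  also have "\<dots> = real n * lg ^ D * (real d * 2 ^ d)"
    using dD by (auto simp: power_mult_distrib)
  also have "\<dots> \<le> real n * lg ^ D * 4 ^ d"
  proof -
    have "real d < 2 ^ d" using less_exp[of d] by (metis of_nat_less_iff of_nat_numeral of_nat_power)
    hence "real d * 2 ^ d \<le> 2 ^ d * 2 ^ d" by (intro mult_right_mono) auto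
    also have "\<dots> = 4 ^ d" by (simp flip: power_mult_distrib)
    finally show ?thesis using e1 by (intro mult_left_mono) auto
  qed
  also have "\<dots> = 2 powr f * 2 powr (2 * real d)"
  proof -
    have a: "2 powr f = real n * lg ^ D" using powr_f[OF npos lg] e1 f by simp
    have "2 powr (2 * real d) = (2::real) ^ (2 * d)" using powr_realpow[of 2 "2*d"] by simp
    also have "\<dots> = 4 ^ d" by (simp add: power_mult)
    finally show ?thesis using a by simp
  qed
  also have "\<dots> = 2 powr (f + 2 * real d)" by (simp add: powr_add)
  also have "\<dots> \<le> 2 powr real k0" using fk0 by (intro powr_mono) auto
  also have "\<dots> = 2 ^ k0" by (simp add: powr_realpow)
  finally have "real (2 * m * card (Bk k0 d)) \<le> real (2 ^ k0)" by simp
  hence "2 * m * card (Bk k0 d) \<le> 2 ^ k0" by (simp only: of_nat_le_iff)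
  hence rA1: "rA m k0 d \<le> 1" by (rule rA_upper[OF k01])
  have "red n (C2 n k0 d) = real k0 + real E + rA m k0 d" using R_eq[OF adm] E by (simp add: m_def)
  also have "\<dots> \<le> f + real (2 * d + E + 2)" using k0f rA1 by simp
  finally show ?thesis using adm by blast
qed


lemma lower:
  assumes dD: "Suc D = d" and E: "E = ell d + 2 * d" and K: "K = 36 * (3 * real D) ^ D" and Kpos: "K > 0"
    and c1: "\<forall>t\<ge>c1. t + U < 2 powr t / (K * 2 ^ D)" and c1nn: "0 \<le> c1"
    and lg: "lg = log 2 (real n)" and f: "f = lg + real D * log 2 lg"
    and e1: "3 + 2 * real D \<le> lg / 2" and e2: "real D * log 2 lg \<le> lg"
    and e3: "16 * lg + 2 * real E + 12 \<le> real n"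
    and e4: "f + U < sqrt (real n) / (2 * K)"
    and k: "k \<in> admissible_k d n" and kf: "real k \<le> f - c1"
  shows "f + U < red n (C2 n k d)"
proof -
  define m where "m = n - k - ell d - 2 * d"
  have R: "red n (C2 n k d) = real k + real E + rA m k d" using R_eq[OF k] E by (simp add: m_def)
  have lg1: "1 \<le> lg" using e1 by simp
  have npos: "n > 0" using lg1 lg by (cases "n = 0") (auto simp: log_def)
  have Npos: "real n > 0" using npos by simp
  have llg: "0 \<le> log 2 lg" using lg1 by simp
  have flg: "lg \<le> f" "f \<le> 2 * lg" using f llg e2 by auto
  have dk: "d \<le> k" by (rule adm_dk[OF k])
  have kn: "k + E \<le> n" using k E by (simp add: admissible_k_def)
  have rm: "real m = real n - real k - real E" using kn E by (simp add: m_def)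
  have rA0: "0 \<le> rA m k d" by (rule rA_nonneg[OF dk])
  show ?thesis
  proof (cases "lg / 2 \<le> real k")
    case True
    have "real (3 + 2 * D) \<le> real k" using True e1 by simp
    hence k3: "3 \<le> k" and Dk: "2 * D \<le> k" by (simp_all only: of_nat_le_iff)
    have kpos: "real k > 0" using k3 by simp
    have mN: "real n / 2 \<le> real m" using rm kf flg e3 c1nn by linarith
    have kN: "6 * real k \<le> real n" using kf flg e3 c1nn by linarith
    have LBk: "real n * real k ^ D / (K * 2 ^ k) \<le> rA m k d"
      using LB[OF dD k3 Dk dk mN kN] K by simp
    define t where "t = f - real k"
    have tc: "c1 \<le> t" using kf by (simp add: t_def)
    have "(2::real) ^ k = 2 powr real k" by (simp add: powr_realpow)
    also have "\<dots> = 2 powr f / 2 powr t" by (simp add: t_def powr_diff)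
    also have "2 powr f = real n * lg ^ D" using powr_f[OF npos lg] lg1 f by simp
    finally have p2: "(2::real) ^ k = real n * lg ^ D / 2 powr t" .
    have kD: "lg ^ D / 2 ^ D \<le> real k ^ D"
    proof -
      have "(lg / 2) ^ D \<le> real k ^ D" using True lg1 by (intro power_mono) auto
      thus ?thesis by (simp add: power_divide)
    qed
    have lgD: "lg ^ D > 0" using lg1 by simp
    have "2 powr t / (K * 2 ^ D) = real n * (lg ^ D / 2 ^ D) / (K * (real n * lg ^ D / 2 powr t))"
      using Npos lgD Kpos lg1 by (simp add: field_simps)
    also have "\<dots> \<le> real n * real k ^ D / (K * (real n * lg ^ D / 2 powr t))"
      using kD Npos Kpos lgD by (intro divide_right_mono mult_left_mono) auto
    also have "\<dots> = real n * real k ^ D / (K * 2 ^ k)" using p2 by simp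
    also note LBk
    finally have "2 powr t / (K * 2 ^ D) \<le> rA m k d" .
    moreover have "t + U < 2 powr t / (K * 2 ^ D)" using c1 tc by blast
    ultimately show ?thesis using R t_def by simp
  next
    case False
    define k2 where "k2 = nat \<lceil>lg / 2\<rceil>"
    have k2a: "lg / 2 \<le> real k2" "real k2 < lg / 2 + 1" using lg1 by (simp_all add: k2_def) linarith+
    have kk2: "k \<le> k2" using False k2a by simp
    have "real (3 + 2 * D) \<le> real k2" using k2a e1 by simp
    hence k3: "3 \<le> k2" and Dk: "2 * D \<le> k2" by (simp_all only: of_nat_le_iff)
    have dk2: "d \<le> k2" using dk kk2 by simp
    have mN: "real n / 2 \<le> real m" using rm False flg e3 by simp
    have kN: "6 * real k2 \<le> real n" using k2a e3 lg1 by simp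
    have LBk: "real n * real k2 ^ D / (K * 2 ^ k2) \<le> rA m k2 d"
      using LB[OF dD k3 Dk dk2 mN kN] K by simp
    have mono: "rA m k2 d \<le> rA m k d" by (rule rA_mono_k[OF dk kk2])
    have sq: "2 powr (lg / 2) = sqrt (real n)"
    proof -
      have "2 powr (lg / 2) = (2 powr lg) powr (1/2)" by (simp add: powr_powr)
      also have "\<dots> = sqrt (real n)" using Npos lg by (simp add: powr_half_sqrt)
      finally show ?thesis .
    qed
    have p2: "(2::real) ^ k2 \<le> 2 * sqrt (real n)"
    proof -
      have "(2::real) ^ k2 = 2 powr real k2" by (simp add: powr_realpow)
      also have "\<dots> \<le> 2 powr (lg / 2 + 1)" using k2a by (intro powr_mono) auto
      also have "\<dots> = 2 * sqrt (real n)" using sq by (simp add: powr_add)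
      finally show ?thesis .
    qed
    have sqpos: "sqrt (real n) > 0" using Npos by simp
    have "sqrt (real n) / (2 * K) = real n / (K * (2 * sqrt (real n)))"
      using sqpos Kpos by (simp add: field_simps)
    also have "\<dots> \<le> real n * real k2 ^ D / (K * 2 ^ k2)"
    proof -
      have "1 \<le> real k2 ^ D" using k3 by simp
      hence "real n \<le> real n * real k2 ^ D" using Npos by simp
      moreover have "K * 2 ^ k2 \<le> K * (2 * sqrt (real n))" using p2 Kpos by simp
      ultimately show ?thesis using Kpos Npos
        by (intro frac_le) auto
    qed
    also note LBk
    also note mono
    finally have "sqrt (real n) / (2 * K) \<le> rA m k d" .
    thus ?thesis using R e4 by simp
  qed
qed


lemma ev_t: "(M::real) > 0 \<Longrightarrow> eventually (\<lambda>t::real. t + U < 2 powr t / M) at_top"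
  by real_asymp

lemma ev_n1: "eventually (\<lambda>n. A \<le> log 2 (real n) / 2) sequentially" for A :: real
  by real_asymp
lemma ev_n2: "eventually (\<lambda>n. B * log 2 (log 2 (real n)) + A \<le> log 2 (real n)) sequentially" for A B :: real
  by real_asymp
lemma ev_n3: "eventually (\<lambda>n. 16 * log 2 (real n) + A \<le> real n) sequentially" for A :: real
  by real_asymp
lemma ev_n4: "K > 0 \<Longrightarrow> eventually (\<lambda>n. log 2 (real n) + B * log 2 (log 2 (real n)) + U < sqrt (real n) / (2 * K)) sequentially"
  for K B U :: real
  by real_asymp


theorem lemma8:
  fixes d :: nat
  assumes "d > 0"
  shows "\<exists>C::real. \<forall>\<^sub>F n in sequentially.
           \<bar>min_red d n - (log 2 (real n) + (real d - 1) * log 2 (log 2 (real n)))\<bar> \<le> C \<and>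
           (\<exists>k \<in> admissible_k d n. red n (C2 n k d) = min_red d n \<and>
              \<bar>real k - (log 2 (real n) + (real d - 1) * log 2 (log 2 (real n)))\<bar> \<le> C)"
proof -
  define D where "D = d - 1"
  have dD: "Suc D = d" using assms by (simp add: D_def)
  have rd: "real d - 1 = real D" using dD by auto
  define E where "E = ell d + 2 * d"
  define U where "U = real (2 * d + E + 2)"
  define K where "K = 36 * (3 * real D) ^ D"
  have Kpos: "K > 0"
  proof (cases "D = 0")
    case True thus ?thesis by (simp add: K_def)
  next
    case False thus ?thesis by (simp add: K_def)
  qed
  have "eventually (\<lambda>t::real. t + U < 2 powr t / (K * 2 ^ D)) at_top"
    by (rule ev_t) (use Kpos in simp)
  then obtain c0 where c0: "\<And>t. t \<ge> c0 \<Longrightarrow> t + U < 2 powr t / (K * 2 ^ D)"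
    by (auto simp: eventually_at_top_linorder)
  define c1 where "c1 = max 0 c0"
  have c1: "\<forall>t\<ge>c1. t + U < 2 powr t / (K * 2 ^ D)" using c0 by (simp add: c1_def)
  have c1nn: "0 \<le> c1" by (simp add: c1_def)
  have ev: "eventually (\<lambda>n. 3 + 2 * real D + real (ell d) \<le> log 2 (real n) / 2 \<and>
      real D * log 2 (log 2 (real n)) + (1 + 2 * real d) \<le> log 2 (real n) \<and>
      16 * log 2 (real n) + (2 * real E + 12) \<le> real n \<and>
      log 2 (real n) + real D * log 2 (log 2 (real n)) + U < sqrt (real n) / (2 * K)) sequentially"
    by (intro eventually_conj ev_n1 ev_n2 ev_n3 ev_n4 Kpos)
  show ?thesis
  proof (rule exI[of _ "max U c1"], rule eventually_mono[OF ev], elim conjE)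
    fix n :: nat
    define lg where "lg = log 2 (real n)"
    define f where "f = lg + real D * log 2 lg"
    assume e1: "3 + 2 * real D + real (ell d) \<le> log 2 (real n) / 2"
      and e2: "real D * log 2 (log 2 (real n)) + (1 + 2 * real d) \<le> log 2 (real n)"
      and e3: "16 * log 2 (real n) + (2 * real E + 12) \<le> real n"
      and e4: "log 2 (real n) + real D * log 2 (log 2 (real n)) + U < sqrt (real n) / (2 * K)"
    note e1 = e1[folded lg_def] and e2 = e2[folded lg_def] and e3 = e3[folded lg_def]
      and e4 = e4[folded lg_def, folded f_def]
    have lg1: "1 \<le> lg" using e1 by simp
    have ub: "\<exists>k\<in>admissible_k d n. red n (C2 n k d) \<le> f + U"
      using upper_k0[OF dD E_def lg_def f_def lg1 _ _] e1 e2 e3 by (simp add: U_def)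
    then obtain k0 where k0: "k0 \<in> admissible_k d n" "red n (C2 n k0 d) \<le> f + U" by blast
    have fin: "finite (admissible_k d n)"
      by (rule finite_subset[of _ "{..n}"]) (auto simp: admissible_k_def)
    let ?S = "(\<lambda>k. red n (C2 n k d)) ` admissible_k d n"
    have Sne: "?S \<noteq> {}" using k0 by blast
    have "min_red d n \<in> ?S" unfolding min_red_def by (rule Min_in) (use fin Sne in auto)
    then obtain ks where ks: "ks \<in> admissible_k d n" "red n (C2 n ks d) = min_red d n" by auto
    have "min_red d n \<le> red n (C2 n k0 d)" unfolding min_red_def
      by (rule Min_le) (use fin k0 in auto)
    hence mu: "min_red d n \<le> f + U" using k0 by simp
    have "real ks \<le> red n (C2 n ks d)"
      using R_eq[OF ks(1)] rA_nonneg[OF adm_dk[OF ks(1)]] by simp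
    hence ksu: "real ks \<le> min_red d n" using ks by simp
    have ksl: "f - c1 < real ks"
    proof (rule ccontr)
      assume "\<not> f - c1 < real ks"
      hence "real ks \<le> f - c1" by simp
      hence "f + U < red n (C2 n ks d)"
        by (intro lower[OF dD E_def K_def Kpos c1 c1nn lg_def f_def _ _ _ e4 ks(1)])
          (use e1 e2 e3 in simp_all)
      thus False using ks mu by simp
    qed
    have Upos: "0 \<le> U" by (simp add: U_def)
    show "\<bar>min_red d n - (log 2 (real n) + (real d - 1) * log 2 (log 2 (real n)))\<bar> \<le> max U c1 \<and>
          (\<exists>k\<in>admissible_k d n. red n (C2 n k d) = min_red d n \<and>
             \<bar>real k - (log 2 (real n) + (real d - 1) * log 2 (log 2 (real n)))\<bar> \<le> max U c1)"
      unfolding rd lg_def[symmetric] f_def[symmetric]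
      using ks ksl ksu mu by (auto simp: abs_le_iff intro!: bexI[of _ ks])
  qed
qed


end
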